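(* Let $r\geq 3$ and let $D$ be an $m$-colored semicomplete $r$-partite digraph such that every directed $4$-cycle $\overrightarrow{C}_4$ contained in $D$ (as a subdigraph) is at most $2$-colored. Let $x,y$ be distinct vertices of $D$. If there exists a directed path from $x$ to $y$ using exactly $3$ colors and there is no directed path from $y$ to $x$ using at most $3$ colors, then $d(x,y)\leq 2$.
   Context: A semicomplete $r$-partite digraph ($r\ge 2$) is a digraph whose vertex set is partitioned into $r$ nonempty independent sets (partite sets) such that for any two vertices $u,v$ in different partite sets at least one of the arcs $(u,v)$, $(v,u)$ is present (both may be present); there are no arcs inside a partite set. An $m$-colored digraph is a digraph whose arcs are each assigned one of $m$ colors. A directed path (no repeated vertices) is $j$-colored if its arcs use exactly $j$ distinct colors; it uses at most $k$ colors if it is $j$-colored for some $1\le j\le k$. A subdigraph is at most $k$-colored if its arcs use at most $k$ colors. $\overrightarrow{C}_n$ is the directed cycle of length $n$. $d(x,y)$ denotes the minimum number of arcs of a directed path from $x$ to $y$. *)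

theory Defs
  imports Main
begin

definition semicomplete_multipartite ::
  "'a set \<Rightarrow> ('a \<times> 'a) set \<Rightarrow> nat \<Rightarrow> ('a \<Rightarrow> nat) \<Rightarrow> bool" where
  "semicomplete_multipartite V A r part \<longleftrightarrow>
     finite V \<and> r \<ge> 2 \<and>
     A \<subseteq> V \<times> V \<and>
     (\<forall>v\<in>V. part v < r) \<and>
     (\<forall>i<r. \<exists>v\<in>V. part v = i) \<and>
     (\<forall>(u,v)\<in>A. part u \<noteq> part v) \<and>
     (\<forall>u\<in>V. \<forall>v\<in>V. part u \<noteq> part v \<longrightarrow> (u,v) \<in> A \<or> (v,u) \<in> A)"

definition m_colored :: "('a \<times> 'a) set \<Rightarrow> nat \<Rightarrow> ('a \<times> 'a \<Rightarrow> nat) \<Rightarrow> bool" where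
  "m_colored A m col \<longleftrightarrow> (\<forall>e\<in>A. col e < m)"

definition arcs_of :: "'a list \<Rightarrow> ('a \<times> 'a) set" where
  "arcs_of p = set (zip p (tl p))"

definition dpath :: "('a \<times> 'a) set \<Rightarrow> 'a list \<Rightarrow> 'a \<Rightarrow> 'a \<Rightarrow> bool" where
  "dpath A p x y \<longleftrightarrow> p \<noteq> [] \<and> hd p = x \<and> last p = y \<and> distinct p \<and> arcs_of p \<subseteq> A"

definition num_colors :: "('a \<times> 'a \<Rightarrow> nat) \<Rightarrow> 'a list \<Rightarrow> nat" where
  "num_colors col p = card (col ` arcs_of p)"

definition ddist :: "('a \<times> 'a) set \<Rightarrow> 'a \<Rightarrow> 'a \<Rightarrow> nat" where
  "ddist A x y = (LEAST n. \<exists>p. dpath A p x y \<and> length p = Suc n)"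

definition C4_at_most_2_colored :: "('a \<times> 'a) set \<Rightarrow> ('a \<times> 'a \<Rightarrow> nat) \<Rightarrow> bool" where
  "C4_at_most_2_colored A col \<longleftrightarrow>
     (\<forall>a b c d. distinct [a,b,c,d] \<and> (a,b) \<in> A \<and> (b,c) \<in> A \<and> (c,d) \<in> A \<and> (d,a) \<in> A
        \<longrightarrow> card (col ` {(a,b),(b,c),(c,d),(d,a)}) \<le> 2)"

end

theory Submission
  imports Defs
begin

lemma arc_of_path:
  assumes "dpath A p x y" "Suc i < length p"
  shows "(p!i, p!Suc i) \<in> A"
proof -
  have "(p!i, p!Suc i) \<in> set (zip p (tl p))"
    using assms(2) by (auto simp: set_zip nth_tl intro!: exI[of _ i])
  thus ?thesis using assms(1) by (auto simp: dpath_def arcs_of_def)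
qed

lemma nc_le: "num_colors col p \<le> length p - 1"
proof -
  have "num_colors col p \<le> card (set (zip p (tl p)))"
    unfolding num_colors_def arcs_of_def by (rule card_image_le) simp
  also have "\<dots> \<le> length (zip p (tl p))" by (rule card_length)
  finally show ?thesis by simp
qed

lemma nc_ge: assumes "length p \<ge> 2" shows "1 \<le> num_colors col p"
proof -
  obtain a b t where p: "p = a # b # t" using assms
    by (cases p; cases "tl p") auto
  have "arcs_of p \<noteq> {}" by (simp add: arcs_of_def p)
  thus ?thesis unfolding num_colors_def
    by (simp add: Suc_le_eq card_gt_0_iff arcs_of_def)
qed

theorem mainTheorem3:
  fixes V :: "'a set" and A :: "('a \<times> 'a) set" and r m :: nat
    and part :: "'a \<Rightarrow> nat" and col :: "'a \<times> 'a \<Rightarrow> nat" and x y :: 'a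
  assumes "r \<ge> 3"
    and "semicomplete_multipartite V A r part"
    and "m_colored A m col"
    and "C4_at_most_2_colored A col"
    and "x \<in> V" and "y \<in> V" and "x \<noteq> y"
    and "\<exists>p. dpath A p x y \<and> num_colors col p = 3"
    and "\<not> (\<exists>q. dpath A q y x \<and> 1 \<le> num_colors col q \<and> num_colors col q \<le> 3)"
  shows "ddist A x y \<le> 2"
proof -
  have AV: "A \<subseteq> V \<times> V" and Apart: "\<And>u v. (u,v) \<in> A \<Longrightarrow> part u \<noteq> part v"
    and tot: "\<And>u v. u \<in> V \<Longrightarrow> v \<in> V \<Longrightarrow> part u \<noteq> part v \<Longrightarrow> (u,v) \<in> A \<or> (v,u) \<in> A"
    using assms(2) unfolding semicomplete_multipartite_def by auto
  have short: False if "dpath A q y x" "2 \<le> length q" "length q \<le> 4" for q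
    using assms(9) that nc_le[of col q] nc_ge[of q col] by force
  have C4: "\<And>a b c d. distinct [a,b,c,d] \<Longrightarrow> (a,b) \<in> A \<Longrightarrow> (b,c) \<in> A \<Longrightarrow> (c,d) \<in> A
     \<Longrightarrow> (d,a) \<in> A \<Longrightarrow> card (col ` {(a,b),(b,c),(c,d),(d,a)}) \<le> 2"
    using assms(4) unfolding C4_at_most_2_colored_def by blast
  show ?thesis
  proof (cases "\<exists>z. (x,z) \<in> A \<and> (z,y) \<in> A")
    case True
    then obtain z where z: "(x,z) \<in> A" "(z,y) \<in> A" by blast
    have "z \<noteq> x" "z \<noteq> y" using Apart[OF z(1)] Apart[OF z(2)] by auto
    hence "dpath A [x,z,y] x y" using z assms(7) by (auto simp: dpath_def arcs_of_def)
    hence "\<exists>q. dpath A q x y \<and> length q = Suc 2" by force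
    thus ?thesis unfolding ddist_def by (rule Least_le)
  next
    case False
    note nz = False
    have yx: "(y,x) \<notin> A"
    proof
      assume "(y,x) \<in> A"
      hence "dpath A [y,x] y x" using assms(7) by (auto simp: dpath_def arcs_of_def)
      thus False using short by force
    qed
    show ?thesis
    proof (cases "part x = part y")
      case False
      hence "(x,y) \<in> A" using tot[OF assms(5,6)] yx by blast
      hence "dpath A [x,y] x y" using assms(7) by (auto simp: dpath_def arcs_of_def)
      hence "\<exists>q. dpath A q x y \<and> length q = Suc 1" by force
      hence "ddist A x y \<le> 1" unfolding ddist_def by (rule Least_le)
      thus ?thesis by simp
    next
      case True
      note pxy = True
      have noyzx: False if "(y,z) \<in> A" "(z,x) \<in> A" for z
      proof -
        have "z \<noteq> x" "z \<noteq> y" using Apart[OF that(1)] Apart[OF that(2)] by auto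
        hence "dpath A [y,z,x] y x" using that assms(7) by (auto simp: dpath_def arcs_of_def)
        thus False using short by force
      qed
      have clI: "(z,y) \<in> A \<and> (x,z) \<notin> A" if "z \<in> V" "part z \<noteq> part x" "(z,x) \<in> A" for z
        using that tot[OF \<open>y \<in> V\<close> \<open>z \<in> V\<close>] pxy noyzx nz by metis
      have clO: "(y,z) \<in> A \<and> (x,z) \<in> A" if "z \<in> V" "part z \<noteq> part x" "(z,x) \<notin> A" for z
        using that tot[OF \<open>y \<in> V\<close> \<open>z \<in> V\<close>] tot[OF \<open>x \<in> V\<close> \<open>z \<in> V\<close>] pxy nz by metis
      obtain p where p: "dpath A p x y" using assms(8) by blast
      define n where "n = length p"
      have pne: "p \<noteq> []" and dp: "distinct p" using p by (auto simp: dpath_def)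
      have p0: "p!0 = x" using p by (auto simp: dpath_def hd_conv_nth)
      have pl: "p!(n-1) = y" using p by (auto simp: dpath_def last_conv_nth n_def)
      have n2: "n \<ge> 2"
      proof (rule ccontr)
        assume "\<not> n \<ge> 2"
        hence "n = 1" using pne n_def by (cases p) (auto simp: Suc_le_eq)
        thus False using p0 pl assms(7) by simp
      qed
      have arc: "\<And>i. Suc i < n \<Longrightarrow> (p!i, p!Suc i) \<in> A" using arc_of_path[OF p] n_def by blast
      have inV: "\<And>i. Suc i < n \<Longrightarrow> p!i \<in> V \<and> p!Suc i \<in> V" using arc AV by blast
      have idx: "\<And>i j. i < n \<Longrightarrow> j < n \<Longrightarrow> i \<noteq> j \<Longrightarrow> p!i \<noteq> p!j"
        using dp n_def by (simp add: nth_eq_iff_index_eq)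
      define good where "good i \<longleftrightarrow> part (p!i) \<noteq> part x \<and> (p!i, x) \<in> A" for i
      have gl: "good (n-2)"
      proof -
        have a: "(p!(n-2), y) \<in> A" using arc[of "n-2"] n2 pl by (simp add: Suc_diff_Suc numeral_2_eq_2)
        have v: "p!(n-2) \<in> V" using inV[of "n-2"] n2 by simp
        have pp: "part (p!(n-2)) \<noteq> part x" using Apart[OF a] pxy by simp
        show ?thesis unfolding good_def using pp clO[OF v pp] a nz by blast
      qed
      define j where "j = (LEAST i. good i)"
      have gj: "good j" unfolding j_def using gl by (rule LeastI)
      have jle: "j \<le> n - 2" unfolding j_def using gl by (rule Least_le)
      have ngood: "\<And>i. i < j \<Longrightarrow> \<not> good i" unfolding j_def using not_less_Least by blast
      have j0: "j \<noteq> 0" proof assume "j = 0" thus False using gj p0 by (simp add: good_def) qed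
      have wV: "p!j \<in> V" using inV[of j] jle n2 by simp
      have wI: "(p!j, y) \<in> A \<and> (x, p!j) \<notin> A" using clI[OF wV] gj by (auto simp: good_def)
      have a1: "(p!(j-1), p!j) \<in> A" using arc[of "j-1"] j0 jle n2 by simp
      have j1: "j \<noteq> 1"
      proof
        assume "j = 1" thus False using a1 p0 wI by simp
      qed
      show ?thesis
      proof (cases "part (p!(j-1)) = part x")
        case False
        have uV: "p!(j-1) \<in> V" using inV[of "j-1"] j0 jle n2 by simp
        have "(p!(j-1), x) \<notin> A" using ngood[of "j-1"] j0 False by (auto simp: good_def)
        hence yu: "(y, p!(j-1)) \<in> A" using clO[OF uV False] by blast
        have d: "p!(j-1) \<noteq> p!j" using idx[of "j-1" j] j0 jle n2 by simp
        have "dpath A [y, p!(j-1), p!j, x] y x"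
          using yu a1 gj d False assms(7) pxy by (auto simp: dpath_def arcs_of_def good_def)
        thus ?thesis using short by force
      next
        case True
        have e: "Suc (j-2) = j-1" using j0 j1 by arith
        have "Suc (j-2) < n" using e jle n2 j0 by arith
        hence a2: "(p!(j-2), p!(j-1)) \<in> A" using arc[of "j-2"] e by simp
        have uV: "p!(j-2) \<in> V" using a2 AV by blast
        have pu: "part (p!(j-2)) \<noteq> part x" using Apart[OF a2] True by simp
        have "(p!(j-2), x) \<notin> A" using ngood[of "j-2"] j0 pu by (auto simp: good_def)
        hence uO: "(y, p!(j-2)) \<in> A \<and> (x, p!(j-2)) \<in> A" using clO[OF uV pu] by blast
        have ds1: "p!(j-2) \<noteq> p!(j-1)" using idx[of "j-2" "j-1"] j0 j1 jle n2 by simp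
        have ds2: "p!(j-2) \<noteq> p!j" using idx[of "j-2" "j"] j0 j1 jle n2 by simp
        have ds3: "p!(j-1) \<noteq> p!j" using idx[of "j-1" "j"] j0 j1 jle n2 by simp
        have ds4: "p!(j-1) \<noteq> x" using idx[of "j-1" 0] j0 j1 jle n2 p0 by simp
        have ds5: "p!(j-1) \<noteq> y" using idx[of "j-1" "n-1"] j0 j1 jle n2 pl by simp
        note ds = ds1 ds2 ds3 ds4 ds5
        let ?u = "p!(j-2)" and ?q = "p!(j-1)" and ?w = "p!j"
        have wx: "(?w, x) \<in> A" and pw: "part ?w \<noteq> part x" using gj by (auto simp: good_def)
        have c: "card (col ` {(x,?u),(?u,?q),(?q,?w),(?w,x)}) \<le> 2"
          using C4[of x ?u ?q ?w] uO a2 a1 wx ds pu pw by auto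
        have dq: "dpath A [y,?u,?q,?w,x] y x"
          using uO a2 a1 wx ds pu pw pxy assms(7) by (auto simp: dpath_def arcs_of_def)
        have "num_colors col [y,?u,?q,?w,x] \<le> card (insert (col (y,?u)) (col ` {(x,?u),(?u,?q),(?q,?w),(?w,x)}))"
          unfolding num_colors_def arcs_of_def by (rule card_mono) auto
        also have "\<dots> \<le> 3" using c by (simp add: card_insert_if)
        finally have "num_colors col [y,?u,?q,?w,x] \<le> 3" .
        thus ?thesis using assms(9) dq nc_ge[of "[y,?u,?q,?w,x]" col] by auto
      qed
    qed
  qed
qed

end
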